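(* Let $\Lambda_1,\ldots,\Lambda_d\in\mathcal{M}_2$ and let $C$ be a $d$-copula. For a $d$-copula $D$, bivariate tail dependence functions $\Xi_1,\dots,\Xi_d$, $w_0\in\mathbb{R}_+$ and $\mathbf{w}=(w_1,\dots,w_d)\in\mathbb{R}_+^d$ write $$\phi_D^{w_0}(\Xi_1,\ldots,\Xi_d)(\mathbf{w}):=\int_0^{w_0}D\big(\partial_1\Xi_1(t,w_1),\ldots,\partial_1\Xi_d(t,w_d)\big)\,dt,\qquad \phi_D(\Xi_1,\ldots,\Xi_d)(\mathbf{w}):=\int_0^{\infty}D\big(\partial_1\Xi_1(t,w_1),\ldots,\partial_1\Xi_d(t,w_d)\big)\,dt.$$ Then: (1) If $C_n$ are $d$-copulas with $C_n\to C$ pointwise, then $\phi_{C_n}^{w_0}(\Lambda_1,\ldots,\Lambda_d)\to\phi_C^{w_0}(\Lambda_1,\ldots,\Lambda_d)$ pointwise (for every $w_0\in\mathbb{R}_+$). (2) If $\Lambda_i^n\in\mathcal{M}_2$ with $\Lambda_i^n\to\Lambda_i$ pointwise for each $i$, then $\phi_C^{w_0}(\Lambda_1^n,\ldots,\Lambda_d^n)\to\phi_C^{w_0}(\Lambda_1,\ldots,\Lambda_d)$ pointwise (for every $w_0\in\mathbb{R}_+$). (3) If $\Lambda_i^n\in\mathcal{M}_2$ with $\|\partial_1\Lambda_i^n(\cdot,w)-\partial_1\Lambda_i(\cdot,w)\|_{L^1(\mathbb{R}_+)}\to0$ (for all $w\in\mathbb{R}_+$ and each $i$), then $\phi_C(\Lambda_1^n,\ldots,\Lambda_d^n)\to\phi_C(\Lambda_1,\ldots,\Lambda_d)$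 pointwise.
   Context: A $d$-copula is a distribution function on $[0,1]^d$ with uniform univariate margins. For a $d$-copula $C$, its tail dependence function is $\Lambda(\mathbf{w};C):=\lim_{s\searrow0}C(s\mathbf{w})/s$, $\mathbf{w}\in\mathbb{R}_+^d$, $\mathbb{R}_+=[0,\infty)$, provided the limit exists for all $\mathbf{w}$; $\mathcal{M}_d$ denotes the set of $d$-variate tail dependence functions. Elements of $\mathcal{M}_2$ are concave, $1$-Lipschitz, and have almost everywhere defined partial derivatives with values in $[0,1]$. *)

theory Defs
  imports "HOL-Probability.Probability"
begin

definition unit_cube :: "real^'d \<Rightarrow> bool" where
  "unit_cube u \<longleftrightarrow> (\<forall>i. 0 \<le> u $ i \<and> u $ i \<le> 1)"

definition nonneg_vec :: "real^'d \<Rightarrow> bool" where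
  "nonneg_vec w \<longleftrightarrow> (\<forall>i. 0 \<le> w $ i)"

definition copula :: "(real^'d \<Rightarrow> real) \<Rightarrow> bool" where
  "copula C \<longleftrightarrow> (\<exists>M. prob_space M \<and> sets M = sets (borel :: (real^'d) measure) \<and>
     (\<forall>i t. 0 \<le> t \<and> t \<le> 1 \<longrightarrow> measure M {x \<in> space M. x $ i \<le> t} = t) \<and>
     (\<forall>u. unit_cube u \<longrightarrow> C u = measure M {x \<in> space M. \<forall>i. x $ i \<le> u $ i}))"

text \<open>Bivariate tail dependence functions (the class M_2), written in curried form
  Lambda t w = Lambda((t,w)); only values on R_+^2 are meaningful.\<close>
definition M2 :: "(real \<Rightarrow> real \<Rightarrow> real) set" where
  "M2 = {L. \<exists>C :: real^2 \<Rightarrow> real. copula C \<and>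
      (\<forall>t w. 0 \<le> t \<and> 0 \<le> w \<longrightarrow>
         ((\<lambda>s. C (vector [s * t, s * w]) / s) \<longlongrightarrow> L t w) (at_right 0))}"

text \<open>Partial derivative in the first argument (defined a.e.; set to 0 where
  the derivative does not exist, which does not affect any integral below).\<close>
definition part1 :: "(real \<Rightarrow> real \<Rightarrow> real) \<Rightarrow> real \<Rightarrow> real \<Rightarrow> real" where
  "part1 L t w = (if (\<lambda>s. L s w) differentiable (at t) then deriv (\<lambda>s. L s w) t else 0)"

definition phi_fin :: "(real^'d \<Rightarrow> real) \<Rightarrow> real \<Rightarrow> ('d \<Rightarrow> real \<Rightarrow> real \<Rightarrow> real) \<Rightarrow> real^'d \<Rightarrow> real" where
  "phi_fin D w0 Xi w = integral {0..w0} (\<lambda>t. D (\<chi> i. part1 (Xi i) t (w $ i)))"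

definition phi_inf :: "(real^'d \<Rightarrow> real) \<Rightarrow> ('d \<Rightarrow> real \<Rightarrow> real \<Rightarrow> real) \<Rightarrow> real^'d \<Rightarrow> real" where
  "phi_inf D Xi w = integral {0..} (\<lambda>t. D (\<chi> i. part1 (Xi i) t (w $ i)))"

end

theory Submission
  imports Defs
begin

lemma copula_M:
  assumes "copula C"
  obtains M where "prob_space M" "sets M = sets (borel :: (real^'d) measure)"
    "\<And>i t. 0 \<le> t \<Longrightarrow> t \<le> 1 \<Longrightarrow> measure M {x. x $ i \<le> t} = t"
    "\<And>u. unit_cube u \<Longrightarrow> C u = measure M {x. \<forall>i. x $ i \<le> u $ i}"
proof -
  obtain M where M: "prob_space M" "sets M = sets (borel :: (real^'d) measure)"
    "(\<forall>i t. 0 \<le> t \<and> t \<le> 1 \<longrightarrow> measure M {x \<in> space M. x $ i \<le> t} = t)"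
    "(\<forall>u. unit_cube u \<longrightarrow> C u = measure M {x \<in> space M. \<forall>i. x $ i \<le> u $ i})"
    using assms unfolding copula_def by blast
  have sp: "space M = UNIV" using sets_eq_imp_space_eq[OF M(2)] by simp
  show ?thesis using M sp by (intro that) auto
qed

lemma sets_A: "{x::real^'d. \<forall>i. x $ i \<le> u $ i} \<in> sets borel"
  by measurable

lemma sets_B: "{x::real^'d. x $ i \<le> t} \<in> sets borel"
  by measurable

lemma copula_facts:
  fixes C :: "real^'d \<Rightarrow> real"
  assumes "copula C"
  shows copula_bnd: "\<And>u. unit_cube u \<Longrightarrow> 0 \<le> C u \<and> C u \<le> 1"
    and copula_mono: "\<And>u v. unit_cube u \<Longrightarrow> unit_cube v \<Longrightarrow> (\<forall>i. u$i \<le> v$i) \<Longrightarrow> C u \<le> C v"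
    and copula_lip: "\<And>u v. unit_cube u \<Longrightarrow> unit_cube v \<Longrightarrow> C u - C v \<le> (\<Sum>i\<in>UNIV. \<bar>u$i - v$i\<bar>)"
proof -
  obtain M where M: "prob_space M" "sets M = sets (borel :: (real^'d) measure)"
    "\<And>i t. 0 \<le> t \<Longrightarrow> t \<le> 1 \<Longrightarrow> measure M {x. x $ i \<le> t} = t"
    "\<And>u. unit_cube u \<Longrightarrow> C u = measure M {x. \<forall>i. x $ i \<le> u $ i}"
    using copula_M[OF assms] by blast
  interpret prob_space M by fact
  have sA: "\<And>u. {x::real^'d. \<forall>i. x $ i \<le> u $ i} \<in> sets M" using M(2) sets_A by auto
  have sB: "\<And>i t. {x::real^'d. x $ i \<le> t} \<in> sets M" using M(2) sets_B by auto
  show "\<And>u. unit_cube u \<Longrightarrow> 0 \<le> C u \<and> C u \<le> 1" using M(4) by simp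
  show "\<And>u v. unit_cube u \<Longrightarrow> unit_cube v \<Longrightarrow> (\<forall>i. u$i \<le> v$i) \<Longrightarrow> C u \<le> C v"
  proof -
    fix u v :: "real^'d" assume "unit_cube u" "unit_cube v" "\<forall>i. u$i \<le> v$i"
    then have "{x::real^'d. \<forall>i. x $ i \<le> u $ i} \<subseteq> {x. \<forall>i. x $ i \<le> v $ i}"
      using \<open>\<forall>i. u$i \<le> v$i\<close> by (blast intro: order_trans)
    then show "C u \<le> C v" using M(4) sA \<open>unit_cube u\<close> \<open>unit_cube v\<close> by (simp add: finite_measure_mono)
  qed
  show "\<And>u v. unit_cube u \<Longrightarrow> unit_cube v \<Longrightarrow> C u - C v \<le> (\<Sum>i\<in>UNIV. \<bar>u$i - v$i\<bar>)"
  proof -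
    fix u v :: "real^'d" assume u: "unit_cube u" and v: "unit_cube v"
    define D where "D i = {x::real^'d. v$i < x$i \<and> x$i \<le> u$i}" for i
    have sD: "D i \<in> sets M" for i
    proof -
      have "D i = {x. x $ i \<le> u$i} - {x. x$i \<le> v$i}" unfolding D_def by auto
      then show ?thesis using sB by auto
    qed
    have mD: "measure M (D i) \<le> \<bar>u$i - v$i\<bar>" for i
    proof (cases "v$i \<le> u$i")
      case True
      have "D i = {x. x $ i \<le> u$i} - {x. x$i \<le> v$i}" unfolding D_def by auto
      then have "measure M (D i) = measure M {x. x $ i \<le> u$i} - measure M {x. x$i \<le> v$i}"
        using True sB by (auto intro!: finite_measure_Diff)
      also have "\<dots> = u$i - v$i" using M(3) u v unfolding unit_cube_def by auto
      finally show ?thesis by simp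
    next
      case False
      then have "D i = {}" unfolding D_def by auto
      then show ?thesis by simp
    qed
    have sub: "{x::real^'d. \<forall>i. x $ i \<le> u $ i} \<subseteq> {x. \<forall>i. x $ i \<le> v $ i} \<union> (\<Union>i. D i)"
      unfolding D_def by (auto simp: not_le)
    have "C u \<le> measure M ({x. \<forall>i. x $ i \<le> v $ i} \<union> (\<Union>i. D i))"
      using M(4)[OF u] sub sA sD by (auto intro!: finite_measure_mono)
    also have "\<dots> \<le> measure M {x. \<forall>i. x $ i \<le> v $ i} + measure M (\<Union>i. D i)"
      using sA sD by (intro measure_Un_le) auto
    also have "measure M (\<Union>i. D i) \<le> (\<Sum>i\<in>UNIV. measure M (D i))"
      using sD by (intro finite_measure_subadditive_finite) auto
    also have "\<dots> \<le> (\<Sum>i\<in>UNIV. \<bar>u$i - v$i\<bar>)" by (intro sum_mono mD)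
    finally show "C u - C v \<le> (\<Sum>i\<in>UNIV. \<bar>u$i - v$i\<bar>)" using M(4)[OF v] by simp
  qed
qed

lemma copula_2inc:
  fixes C :: "real^2 \<Rightarrow> real"
  assumes "copula C" "0 \<le> a1" "a1 \<le> a2" "a2 \<le> 1" "0 \<le> b1" "b1 \<le> b2" "b2 \<le> 1"
  shows "C (vector [a1,b2]) + C (vector [a2,b1]) \<le> C (vector [a1,b1]) + C (vector [a2,b2])"
proof -
  obtain M where M: "prob_space M" "sets M = sets (borel :: (real^2) measure)"
    "\<And>i t. 0 \<le> t \<Longrightarrow> t \<le> 1 \<Longrightarrow> measure M {x. x $ i \<le> t} = t"
    "\<And>u. unit_cube u \<Longrightarrow> C u = measure M {x. \<forall>i. x $ i \<le> u $ i}"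
    using copula_M[OF assms(1)] by blast
  interpret prob_space M by fact
  define A where "A a b = {x::real^2. x$1 \<le> a \<and> x$2 \<le> b}" for a b
  have sA: "A a b \<in> sets M" for a b unfolding A_def using M(2) by (simp) measurable
  have CA: "0 \<le> a \<Longrightarrow> a \<le> 1 \<Longrightarrow> 0 \<le> b \<Longrightarrow> b \<le> 1 \<Longrightarrow> C (vector [a,b]) = measure M (A a b)" for a b
    using M(4)[of "vector [a,b]"] unfolding A_def unit_cube_def by (simp add: forall_2)
  have "measure M (A a1 b2 \<union> A a2 b1) = measure M (A a1 b2) + measure M (A a2 b1) - measure M (A a1 b2 \<inter> A a2 b1)"
    using sA by (intro measure_Un3) (auto simp: fmeasurable_eq_sets)
  moreover have "A a1 b2 \<inter> A a2 b1 = A a1 b1" using assms unfolding A_def by auto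
  moreover have "measure M (A a1 b2 \<union> A a2 b1) \<le> measure M (A a2 b2)"
    using assms sA by (intro finite_measure_mono) (auto simp: A_def)
  ultimately show ?thesis using assms by (simp add: CA)
qed

lemma ev_small: "\<forall>\<^sub>F s in at_right (0::real). 0 < s \<and> s * K \<le> 1" if "K \<ge> 0" for K :: real
proof -
  have "\<exists>b>0. \<forall>y>0. y < b \<longrightarrow> 0 < y \<and> y * K \<le> 1"
  proof (intro exI[of _ "1/(K+1)"] conjI allI impI)
    fix y :: real assume "0 < y" "y < 1/(K+1)"
    then have "y * (K+1) < 1" using that by (simp add: field_simps)
    then show "y * K \<le> 1" using \<open>0<y\<close> by (simp add: algebra_simps)
  qed (use that in auto)
  then show ?thesis by (simp add: eventually_at_right_field)
qed

lemma lim_scale: "filterlim (\<lambda>s. c * s) (at_right 0) (at_right (0::real))" if "c > 0" for c :: real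
proof (rule tendsto_imp_filterlim_at_right)
  show "((\<lambda>s. c * s) \<longlongrightarrow> 0) (at_right 0)"
    by (rule tendsto_eq_intros) (auto intro: tendsto_ident_at)
  show "\<forall>\<^sub>F x in at_right 0. 0 < c * x" using that
    by (simp add: eventually_at_right_field) (auto intro: exI[of _ 1])
qed

lemma M2E:
  assumes "L \<in> M2"
  obtains C :: "real^2 \<Rightarrow> real" where "copula C"
    "\<And>t w. 0 \<le> t \<Longrightarrow> 0 \<le> w \<Longrightarrow> ((\<lambda>s. C (vector [s * t, s * w]) / s) \<longlongrightarrow> L t w) (at_right 0)"
  using assms unfolding M2_def by blast

lemma unit_cube2: "unit_cube (vector [a, b] :: real^2) \<longleftrightarrow> 0 \<le> a \<and> a \<le> 1 \<and> 0 \<le> b \<and> b \<le> 1"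
  unfolding unit_cube_def by (auto simp: forall_2)

lemma M2_incr:
  assumes "L \<in> M2" "0 \<le> t1" "t1 \<le> t2" "0 \<le> w"
  shows "0 \<le> L t2 w - L t1 w \<and> L t2 w - L t1 w \<le> t2 - t1"
proof -
  obtain C :: "real^2 \<Rightarrow> real" where C: "copula C"
    "\<And>t w. 0 \<le> t \<Longrightarrow> 0 \<le> w \<Longrightarrow> ((\<lambda>s. C (vector [s * t, s * w]) / s) \<longlongrightarrow> L t w) (at_right 0)"
    using assms(1) unfolding M2_def by blast
  have lim: "((\<lambda>s. C (vector [s * t2, s * w]) / s - C (vector [s * t1, s * w]) / s) \<longlongrightarrow> L t2 w - L t1 w) (at_right 0)"
    using assms by (intro tendsto_diff C(2)) auto
  have ev: "\<forall>\<^sub>F s in at_right (0::real). 0 < s \<and> s * (t2 + w) \<le> 1" using assms by (intro ev_small) auto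
  have b: "0 \<le> C (vector [s * t2, s * w]) / s - C (vector [s * t1, s * w]) / s \<and>
           C (vector [s * t2, s * w]) / s - C (vector [s * t1, s * w]) / s \<le> t2 - t1"
    if s: "0 < s \<and> s * (t2 + w) \<le> 1" for s
  proof -
    have p: "s * t1 \<le> s * t2" "0 \<le> s * t1" "0 \<le> s * w"
      using s assms by (simp_all add: mult_left_mono)
    have e: "s * t2 + s * w \<le> 1" using s by (simp add: distrib_left)
    have h: "s * t2 \<le> 1" "s * w \<le> 1" "s * t1 \<le> s * t2" "0 \<le> s * t1" "0 \<le> s * w"
      using p e by linarith+
    have c1: "unit_cube (vector [s * t2, s * w] :: real^2)" "unit_cube (vector [s * t1, s * w] :: real^2)"
      using h by (simp_all add: unit_cube2)
    have "C (vector [s * t1, s * w]) \<le> C (vector [s * t2, s * w])"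
      using c1 h by (intro copula_mono[OF C(1)]) (auto simp: forall_2)
    moreover have "C (vector [s * t2, s * w]) - C (vector [s * t1, s * w]) \<le> s * (t2 - t1)"
      using copula_lip[OF C(1) c1] assms s by (simp add: UNIV_2 algebra_simps)
    ultimately show ?thesis using s
      by (simp add: diff_divide_distrib[symmetric] divide_nonneg_pos pos_divide_le_eq mult.commute)
  qed
  have "0 \<le> L t2 w - L t1 w"
    using b by (intro tendsto_lowerbound[OF lim eventually_mono[OF ev] trivial_limit_at_right_real]) auto
  moreover have "L t2 w - L t1 w \<le> t2 - t1"
    using b by (intro tendsto_upperbound[OF lim eventually_mono[OF ev] trivial_limit_at_right_real]) auto
  ultimately show ?thesis by simp
qed

lemma M2_homog:
  assumes "L \<in> M2" "0 \<le> t" "0 \<le> w" "c > 0"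
  shows "L (c * t) (c * w) = c * L t w"
proof -
  obtain C :: "real^2 \<Rightarrow> real" where C: "copula C"
    "\<And>t w. 0 \<le> t \<Longrightarrow> 0 \<le> w \<Longrightarrow> ((\<lambda>s. C (vector [s * t, s * w]) / s) \<longlongrightarrow> L t w) (at_right 0)"
    using assms(1) unfolding M2_def by blast
  have "((\<lambda>s. C (vector [(c * s) * t, (c * s) * w]) / (c * s)) \<longlongrightarrow> L t w) (at_right 0)"
    using filterlim_compose[OF C(2)[OF assms(2,3)] lim_scale[OF assms(4)]] by simp
  then have "((\<lambda>s. c * (C (vector [(c * s) * t, (c * s) * w]) / (c * s))) \<longlongrightarrow> c * L t w) (at_right 0)"
    by (intro tendsto_mult_left)
  moreover have "(\<lambda>s. c * (C (vector [(c * s) * t, (c * s) * w]) / (c * s))) = (\<lambda>s. C (vector [s * (c * t), s * (c * w)]) / s)"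
    using assms(4) by (auto simp: fun_eq_iff field_simps)
  ultimately have "((\<lambda>s. C (vector [s * (c * t), s * (c * w)]) / s) \<longlongrightarrow> c * L t w) (at_right 0)" by simp
  moreover have "((\<lambda>s. C (vector [s * (c * t), s * (c * w)]) / s) \<longlongrightarrow> L (c * t) (c * w)) (at_right 0)"
    using assms by (intro C(2)) auto
  ultimately show ?thesis using tendsto_unique[OF trivial_limit_at_right_real] by blast
qed

lemma M2_2inc:
  assumes "L \<in> M2" "0 \<le> a" "a \<le> b" "0 \<le> w1" "w1 \<le> w2"
  shows "L b w1 - L a w1 \<le> L b w2 - L a w2"
proof -
  obtain C :: "real^2 \<Rightarrow> real" where C: "copula C"
    "\<And>t w. 0 \<le> t \<Longrightarrow> 0 \<le> w \<Longrightarrow> ((\<lambda>s. C (vector [s * t, s * w]) / s) \<longlongrightarrow> L t w) (at_right 0)"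
    using assms(1) unfolding M2_def by blast
  have lim: "((\<lambda>s. (C (vector [s * b, s * w2]) / s - C (vector [s * a, s * w2]) / s)
     - (C (vector [s * b, s * w1]) / s - C (vector [s * a, s * w1]) / s))
     \<longlongrightarrow> (L b w2 - L a w2) - (L b w1 - L a w1)) (at_right 0)"
    using assms by (intro tendsto_diff C(2)) auto
  have ev: "\<forall>\<^sub>F s in at_right (0::real). 0 < s \<and> s * (b + w2) \<le> 1" using assms by (intro ev_small) auto
  have "0 \<le> (C (vector [s * b, s * w2]) / s - C (vector [s * a, s * w2]) / s)
     - (C (vector [s * b, s * w1]) / s - C (vector [s * a, s * w1]) / s)"
    if s: "0 < s \<and> s * (b + w2) \<le> 1" for s
  proof -
    have "C (vector [s*a, s*w2]) + C (vector [s*b, s*w1]) \<le> C (vector [s*a, s*w1]) + C (vector [s*b, s*w2])"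
    proof -
      have p: "s * a \<le> s * b" "0 \<le> s * a" "0 \<le> s * w1" "s * w1 \<le> s * w2"
        using s assms by (simp_all add: mult_left_mono)
      have e: "s * b + s * w2 \<le> 1" using s by (simp add: distrib_left)
      show ?thesis using p e by (intro copula_2inc[OF C(1)]) linarith+
    qed
    then show ?thesis using s by (simp add: diff_divide_distrib[symmetric] add_divide_distrib[symmetric] divide_nonneg_pos)
  qed
  then have "0 \<le> (L b w2 - L a w2) - (L b w1 - L a w1)"
    by (intro tendsto_lowerbound[OF lim eventually_mono[OF ev] trivial_limit_at_right_real]) auto
  then show ?thesis by simp
qed

lemma M2_scale:
  assumes "L \<in> M2" "0 \<le> a" "a \<le> b" "0 \<le> w" "1 \<le> c"
  shows "L b w - L a w \<le> c * (L (b / c) w - L (a / c) w)"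
proof -
  have "L b w - L a w \<le> L b (c * w) - L a (c * w)"
    using assms mult_right_mono[of 1 c w] by (intro M2_2inc) auto
  also have "L b (c * w) = c * L (b / c) w" using M2_homog[OF assms(1), of "b/c" w c] assms by simp
  also have "L a (c * w) = c * L (a / c) w" using M2_homog[OF assms(1), of "a/c" w c] assms by simp
  finally show ?thesis by (simp add: algebra_simps)
qed

definition cfun :: "(real \<Rightarrow> real) \<Rightarrow> bool" where
  "cfun f \<longleftrightarrow> (\<forall>x y z. 0 < x \<longrightarrow> x < y \<longrightarrow> y < z \<longrightarrow> (f z - f y) * (y - x) \<le> (f y - f x) * (z - y)) \<and>
     (\<forall>a b. 0 \<le> a \<longrightarrow> a \<le> b \<longrightarrow> 0 \<le> f b - f a \<and> f b - f a \<le> b - a)"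

definition rd :: "(real \<Rightarrow> real) \<Rightarrow> real \<Rightarrow> real" where
  "rd f t = (SUP h\<in>{0<..}. (f (t + h) - f t) / h)"

lemma cfun_conc: "cfun f \<Longrightarrow> 0 < x \<Longrightarrow> x < y \<Longrightarrow> y < z \<Longrightarrow> (f z - f y) * (y - x) \<le> (f y - f x) * (z - y)"
  unfolding cfun_def by blast

lemma cfun_lip: "cfun f \<Longrightarrow> 0 \<le> a \<Longrightarrow> a \<le> b \<Longrightarrow> 0 \<le> f b - f a \<and> f b - f a \<le> b - a"
  unfolding cfun_def by blast

lemma slope_bnd: "cfun f \<Longrightarrow> 0 \<le> a \<Longrightarrow> a < b \<Longrightarrow> 0 \<le> (f b - f a) / (b - a) \<and> (f b - f a) / (b - a) \<le> 1"
  using cfun_lip[of f a b] by (auto simp: divide_le_eq)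

lemma sl1: assumes "cfun f" "0 < x" "x < y" "y < z"
  shows "(f z - f x) / (z - x) \<le> (f y - f x) / (y - x)"
proof -
  have c: "(f z - f y) * (y - x) \<le> (f y - f x) * (z - y)" by (rule cfun_conc[OF assms])
  have "(f z - f x) * (y - x) \<le> (f y - f x) * (z - x)"
  proof -
    have "(f z - f x) * (y - x) = (f z - f y) * (y - x) + (f y - f x) * (y - x)" by (simp add: algebra_simps)
    also have "\<dots> \<le> (f y - f x) * (z - y) + (f y - f x) * (y - x)" using c by simp
    also have "\<dots> = (f y - f x) * (z - x)" by (simp add: algebra_simps)
    finally show ?thesis .
  qed
  then show ?thesis using assms by (simp add: divide_le_eq le_divide_eq mult.commute)
qed

lemma sl2: assumes "cfun f" "0 < x" "x < y" "y < z"
  shows "(f z - f y) / (z - y) \<le> (f z - f x) / (z - x)"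
proof -
  have c: "(f z - f y) * (y - x) \<le> (f y - f x) * (z - y)" by (rule cfun_conc[OF assms])
  have "(f z - f y) * (z - x) \<le> (f z - f x) * (z - y)"
  proof -
    have "(f z - f y) * (z - x) = (f z - f y) * (z - y) + (f z - f y) * (y - x)" by (simp add: algebra_simps)
    also have "\<dots> \<le> (f z - f y) * (z - y) + (f y - f x) * (z - y)" using c by simp
    also have "\<dots> = (f z - f x) * (z - y)" by (simp add: algebra_simps)
    finally show ?thesis .
  qed
  then show ?thesis using assms by (simp add: divide_le_eq le_divide_eq mult.commute)
qed

lemma sl3: assumes "cfun f" "0 < x" "x < y" "y < z"
  shows "(f z - f y) / (z - y) \<le> (f y - f x) / (y - x)"
  using sl1[OF assms] sl2[OF assms] by linarith

lemma slope_h: "cfun f \<Longrightarrow> 0 \<le> t \<Longrightarrow> 0 < h \<Longrightarrow> 0 \<le> (f (t + h) - f t) / h \<and> (f (t + h) - f t) / h \<le> 1"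
  using slope_bnd[of f t "t+h"] by simp

lemma rd_bdd: "cfun f \<Longrightarrow> 0 \<le> t \<Longrightarrow> bdd_above ((\<lambda>h. (f (t + h) - f t) / h) ` {0<..})"
  using slope_h[of f t] by (intro bdd_aboveI[of _ 1]) force

lemma R1: "cfun f \<Longrightarrow> 0 \<le> t \<Longrightarrow> 0 < h \<Longrightarrow> (f (t + h) - f t) / h \<le> rd f t"
  unfolding rd_def by (rule cSUP_upper[OF _ rd_bdd]) auto

lemma R2: "cfun f \<Longrightarrow> 0 \<le> t \<Longrightarrow> 0 \<le> rd f t \<and> rd f t \<le> 1"
proof
  assume "cfun f" "0 \<le> t"
  show "0 \<le> rd f t" using R1[of f t 1] slope_bnd[of f t "t+1"] \<open>cfun f\<close> \<open>0 \<le> t\<close> by auto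
  show "rd f t \<le> 1" unfolding rd_def using slope_h[of f t] \<open>cfun f\<close> \<open>0 \<le> t\<close>
    by (intro cSUP_least) auto
qed

lemma R3: assumes "cfun f" "0 < s" "s < t" shows "rd f t \<le> (f t - f s) / (t - s)"
  unfolding rd_def
proof (rule cSUP_least)
  fix h :: real assume "h \<in> {0<..}"
  then show "(f (t + h) - f t) / h \<le> (f t - f s) / (t - s)"
    using sl3[OF assms(1,2,3), of "t+h"] by simp
qed auto

lemma R4: "cfun f \<Longrightarrow> 0 < s \<Longrightarrow> s < t \<Longrightarrow> rd f t \<le> rd f s"
  using R3[of f s t] R1[of f s "t - s"] by simp

lemma R5: assumes "cfun f" "0 < t"
  shows "((\<lambda>h. (f (t + h) - f t) / h) \<longlongrightarrow> rd f t) (at_right 0)"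
proof (rule order_tendstoI)
  fix a assume "a < rd f t"
  then obtain h0 where h0: "h0 > 0" "a < (f (t + h0) - f t) / h0"
    unfolding rd_def using less_cSUP_iff[OF _ rd_bdd[OF assms(1)], of t a] assms by auto
  have "\<forall>h>0. h < h0 \<longrightarrow> a < (f (t + h) - f t) / h"
  proof (intro allI impI)
    fix h :: real assume "0 < h" "h < h0"
    then show "a < (f (t + h) - f t) / h"
      using sl1[OF assms(1) assms(2), of "t+h" "t+h0"] h0 by simp
  qed
  then show "\<forall>\<^sub>F h in at_right 0. a < (f (t + h) - f t) / h"
    using h0 by (auto simp: eventually_at_right_field)
next
  fix a assume "rd f t < a"
  then show "\<forall>\<^sub>F h in at_right 0. (f (t + h) - f t) / h < a"
    using R1[OF assms(1)] assms by (auto simp: eventually_at_right_field intro!: exI[of _ 1])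
      (meson assms(2) le_less_trans less_imp_le)
qed

lemma R6: assumes "cfun f" "0 < t" "0 < k" "k < t"
  shows "rd f t \<le> (f (t + - k) - f t) / (- k) \<and> (f (t + - k) - f t) / (- k) \<le> rd f (t - k)"
proof -
  have e: "(f (t + - k) - f t) / (- k) = (f t - f (t - k)) / (t - (t - k))"
    by (simp add: minus_divide_left)
  show ?thesis unfolding e using R3[OF assms(1), of "t-k" t] R1[OF assms(1), of "t-k" k] assms by simp
qed

lemma R7: assumes "cfun f" "0 < t" "isCont (rd f) t"
  shows "(f has_real_derivative rd f t) (at t)"
  unfolding DERIV_def
proof (rule filterlim_split_at)
  show "((\<lambda>h. (f (t + h) - f t) / h) \<longlongrightarrow> rd f t) (at_right 0)" by (rule R5[OF assms(1,2)])
  have up: "((\<lambda>h. rd f (t + h)) \<longlongrightarrow> rd f t) (at_left 0)"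
    using assms(3) unfolding isCont_iff by (rule tendsto_mono[OF at_le, rotated]) simp
  show "((\<lambda>h. (f (t + h) - f t) / h) \<longlongrightarrow> rd f t) (at_left 0)"
  proof (rule tendsto_sandwich[OF _ _ tendsto_const up])
    have "\<forall>h<0. - t < h \<longrightarrow> rd f t \<le> (f (t + h) - f t) / h \<and> (f (t + h) - f t) / h \<le> rd f (t + h)"
    proof (intro allI impI)
      fix h :: real assume "h < 0" "-t < h"
      then show "rd f t \<le> (f (t + h) - f t) / h \<and> (f (t + h) - f t) / h \<le> rd f (t + h)"
        using R6[OF assms(1,2), of "-h"] by simp
    qed
    then have ev: "\<forall>\<^sub>F h in at_left 0. rd f t \<le> (f (t + h) - f t) / h \<and> (f (t + h) - f t) / h \<le> rd f (t + h)"
      using assms(2) by (auto simp: eventually_at_left_field intro!: exI[of _ "-t"])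
    show "\<forall>\<^sub>F h in at_left 0. rd f t \<le> (f (t + h) - f t) / h" using ev by eventually_elim auto
    show "\<forall>\<^sub>F h in at_left 0. (f (t + h) - f t) / h \<le> rd f (t + h)" using ev by eventually_elim auto
  qed
qed

lemma R8: assumes "cfun f" "0 < t" "f differentiable (at t)"
  shows "deriv f t = rd f t"
proof -
  have "(f has_real_derivative deriv f t) (at t)"
    using assms(3) by (simp add: DERIV_deriv_iff_real_differentiable)
  then have "((\<lambda>h. (f (t + h) - f t) / h) \<longlongrightarrow> deriv f t) (at 0)" by (simp add: DERIV_def)
  then have "((\<lambda>h. (f (t + h) - f t) / h) \<longlongrightarrow> deriv f t) (at_right 0)"
    by (rule tendsto_mono[OF at_le, rotated]) simp
  from tendsto_unique[OF trivial_limit_at_right_real this R5[OF assms(1,2)]] show ?thesis .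
qed

lemma R9: assumes "cfun f" shows "countable {t\<in>{0<..}. \<not> isCont (rd f) t}"
proof -
  have "mono_on {0<..} (\<lambda>t. - rd f t)"
  proof (intro mono_onI)
    fix r s :: real assume "r \<in> {0<..}" "s \<in> {0<..}" "r \<le> s"
    then show "- rd f r \<le> - rd f s" using R4[OF assms, of r s] by (cases "r = s") auto
  qed
  then have "countable {t\<in>{0<..}. \<not> isCont (\<lambda>t. - rd f t) t}"
    by (intro mono_on_ctble_discont_open) auto
  moreover have "isCont (\<lambda>t. - rd f t) t \<longleftrightarrow> isCont (rd f) t" for t
  proof
    assume "isCont (\<lambda>t. - rd f t) t"
    from continuous_minus[OF this] show "isCont (rd f) t" by simp
  next
    assume "isCont (rd f) t"
    from continuous_minus[OF this] show "isCont (\<lambda>t. - rd f t) t" by simp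
  qed
  ultimately show ?thesis by simp
qed

lemma R10:
  assumes f: "cfun f" and fs: "\<And>n. cfun (fs n)" and lim: "\<And>s. 0 < s \<Longrightarrow> (\<lambda>n. fs n s) \<longlonglongrightarrow> f s"
    and t: "0 < t" and d: "f differentiable (at t)"
  shows "(\<lambda>n. rd (fs n) t) \<longlonglongrightarrow> rd f t"
proof (rule order_tendstoI)
  fix a assume a: "a < rd f t"
  have "\<forall>\<^sub>F h in at_right 0. a < (f (t + h) - f t) / h"
    using order_tendstoD(1)[OF R5[OF f t] a] .
  then obtain b where b: "b > 0" "\<And>y. 0 < y \<Longrightarrow> y < b \<Longrightarrow> a < (f (t + y) - f t) / y"
    unfolding eventually_at_right_field by auto
  define h where "h = b / 2"
  have h0: "0 < h" "h < b" using b unfolding h_def by auto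
  have h: "0 < h" "a < (f (t + h) - f t) / h" using h0 b(2)[OF h0] by auto
  have "(\<lambda>n. (fs n (t + h) - fs n t) / h) \<longlonglongrightarrow> (f (t + h) - f t) / h"
    using t h by (intro tendsto_intros lim) auto
  then have "\<forall>\<^sub>F n in sequentially. a < (fs n (t + h) - fs n t) / h"
    using order_tendstoD(1) h(2) by blast
  moreover have "(fs n (t + h) - fs n t) / h \<le> rd (fs n) t" for n using R1[OF fs, of t h] t h by auto
  ultimately show "\<forall>\<^sub>F n in sequentially. a < rd (fs n) t"
    by (metis (mono_tags, lifting) eventually_mono less_le_trans)
next
  fix a assume a: "rd f t < a"
  have "(f has_real_derivative rd f t) (at t)"
    using d R8[OF f t d] by (simp add: DERIV_deriv_iff_real_differentiable[symmetric])
  then have "((\<lambda>h. (f (t + h) - f t) / h) \<longlongrightarrow> rd f t) (at 0)" by (simp add: DERIV_def)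
  then have "((\<lambda>h. (f (t + h) - f t) / h) \<longlongrightarrow> rd f t) (at_left 0)"
    by (rule tendsto_mono[OF at_le, rotated]) simp
  from order_tendstoD(2)[OF this a]
  obtain b where b: "b < 0" "\<And>y. b < y \<Longrightarrow> y < 0 \<Longrightarrow> (f (t + y) - f t) / y < a"
    unfolding eventually_at_left_field by auto
  define h where "h = max (b / 2) (- t / 2)"
  have h: "h < 0" "- t < h" "(f (t + h) - f t) / h < a" using b t unfolding h_def by auto
  have "(\<lambda>n. (fs n (t + h) - fs n t) / h) \<longlonglongrightarrow> (f (t + h) - f t) / h"
    using t h by (intro tendsto_intros lim) auto
  then have "\<forall>\<^sub>F n in sequentially. (fs n (t + h) - fs n t) / h < a"
    using order_tendstoD(2) h(3) by blast
  moreover have "rd (fs n) t \<le> (fs n (t + h) - fs n t) / h" for n using R6[OF fs t, of "-h"] h by auto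
  ultimately show "\<forall>\<^sub>F n in sequentially. rd (fs n) t < a"
    by (metis (mono_tags, lifting) eventually_mono le_less_trans)
qed

definition pd :: "(real \<Rightarrow> real) \<Rightarrow> real \<Rightarrow> real" where
  "pd f t = (if 0 < t then (if f differentiable (at t) then deriv f t else 0) else 0)"

lemma pd_cont: "cfun f \<Longrightarrow> 0 < t \<Longrightarrow> isCont (rd f) t \<Longrightarrow> pd f t = rd f t"
  using R7[of f t] R8[of f t] unfolding pd_def real_differentiable_def by auto

lemma pd_bnd: "cfun f \<Longrightarrow> 0 \<le> pd f t \<and> pd f t \<le> 1"
  using R8[of f t] R2[of f t] unfolding pd_def by auto

lemma pd_meas: assumes f: "cfun f" shows "pd f \<in> borel_measurable borel"
proof -
  define M where "M t = (if 0 < t then rd f t else 1)" for t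
  have "mono (\<lambda>t. - M t)"
  proof (rule monoI)
    fix r s :: real assume "r \<le> s"
    then show "- M r \<le> - M s"
      using R4[OF f, of r s] R2[OF f, of s] R2[OF f, of r] unfolding M_def
      by (cases "r = s") auto
  qed
  then have "(\<lambda>t. - M t) \<in> borel_measurable borel" by (rule borel_measurable_mono)
  then have "(\<lambda>t. - (- M t)) \<in> borel_measurable borel" by (rule borel_measurable_uminus)
  then have [measurable]: "M \<in> borel_measurable borel" by simp
  have g: "(\<lambda>t. if 0 < t then M t else 0) \<in> borel_measurable borel" by measurable
  show ?thesis
  proof (rule measurable_discrete_difference[OF g R9[OF f]])
    fix x assume "x \<in> space borel" "x \<notin> {t \<in> {0<..}. \<not> isCont (rd f) t}"
    then show "(if 0 < x then M x else 0) = pd f x"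
      using pd_cont[OF f, of x] unfolding M_def pd_def by auto
  qed auto
qed

lemma lip_isCont:
  fixes f :: "real \<Rightarrow> real"
  assumes lip: "\<And>a b. 0 \<le> a \<Longrightarrow> a \<le> b \<Longrightarrow> 0 \<le> f b - f a \<and> f b - f a \<le> b - a" and y: "0 < y"
  shows "isCont f y"
  unfolding isCont_def
proof (rule LIM_I)
  fix r :: real assume r: "0 < r"
  show "\<exists>s>0. \<forall>x. x \<noteq> y \<and> norm (x - y) < s \<longrightarrow> norm (f x - f y) < r"
  proof (intro exI[of _ "min y r"] conjI allI impI)
    fix x assume x: "x \<noteq> y \<and> norm (x - y) < min y r"
    show "norm (f x - f y) < r"
    proof (cases "x \<le> y")
      case True
      then show ?thesis using lip[of x y] x by auto
    next
      case False
      then show ?thesis using lip[of y x] x y by auto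
    qed
  qed (use y r in auto)
qed

lemma geo_mid:
  fixes f :: "real \<Rightarrow> real"
  assumes scale: "\<And>a b c. 0 \<le> a \<Longrightarrow> a \<le> b \<Longrightarrow> 1 \<le> c \<Longrightarrow> f b - f a \<le> c * (f (b / c) - f (a / c))"
    and p: "0 < p" "p < m" "m < q" "m * m = p * q"
  shows "(f q - f m) * (m - p) \<le> (f m - f p) * (q - m)"
proof -
  have c: "1 \<le> m / p" using p by (simp add: le_divide_eq)
  have e1: "q / (m / p) = m" using p by (simp add: field_simps)
  have e2: "m / (m / p) = p" using p by simp
  have "f q - f m \<le> (m / p) * (f m - f p)"
    using scale[OF _ _ c, of m q] p e1 e2 by simp
  then have "(f q - f m) * (m - p) \<le> ((m / p) * (f m - f p)) * (m - p)"
    using p by (intro mult_right_mono) auto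
  also have "\<dots> = (f m - f p) * ((m * m - m * p) / p)" using p(1) by (simp add: field_simps)
  also have "(m * m - m * p) / p = q - m" using p by (simp add: field_simps)
  finally show ?thesis .
qed

lemma geo_conc:
  fixes f :: "real \<Rightarrow> real"
  assumes scale: "\<And>a b c. 0 \<le> a \<Longrightarrow> a \<le> b \<Longrightarrow> 1 \<le> c \<Longrightarrow> f b - f a \<le> c * (f (b / c) - f (a / c))"
    and cont: "\<And>y. 0 < y \<Longrightarrow> isCont f y"
    and xyz: "0 < x" "x < y" "y < z"
  shows "(f z - f y) * (y - x) \<le> (f y - f x) * (z - y)"
proof -
  define K where "K = (f z - f x) / (z - x)"
  define g where "g u = f u - (f x + K * (u - x))" for u
  have gmid: "0 \<le> g m" if mq: "0 < p" "p < m" "m < q" "m * m = p * q" and gp: "0 \<le> g p" "0 \<le> g q" for p m q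
  proof -
    have A: "(f q - f m) * (m - p) \<le> (f m - f p) * (q - m)" by (rule geo_mid[OF scale mq])
    have B1: "(g q - g m) * (m - p) = (f q - f m) * (m - p) - K * (q - m) * (m - p)"
      by (simp add: g_def algebra_simps)
    have B2: "(g m - g p) * (q - m) = (f m - f p) * (q - m) - K * (q - m) * (m - p)"
      by (simp add: g_def algebra_simps)
    have "(g q - g m) * (m - p) \<le> (g m - g p) * (q - m)" using A B1 B2 by linarith
    then have "g q * (m - p) + g p * (q - m) \<le> g m * (q - p)" by (simp add: algebra_simps)
    moreover have "0 \<le> g q * (m - p) + g p * (q - m)" using mq gp by simp
    ultimately have "0 \<le> g m * (q - p)" by linarith
    then show ?thesis using mq by (simp add: zero_le_mult_iff)
  qed
  define r where "r = z / x"
  have r: "1 < r" using xyz by (simp add: r_def)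
  define P where "P k j = x * r powr (real j / 2^k)" for k :: nat and j :: nat
  have Ppos: "0 < P k j" for k j using xyz r by (simp add: P_def)
  have dy: "\<forall>j \<le> 2^k. 0 \<le> g (P k j)" for k
  proof (induction k)
    case 0
    have gx: "g x = 0" by (simp add: g_def)
    have gz: "g z = 0" using xyz by (simp add: g_def K_def)
    have P0: "P 0 0 = x" "P 0 1 = z" using xyz r by (simp_all add: P_def r_def)
    show ?case
    proof (intro allI impI)
      fix j :: nat assume "j \<le> 2 ^ 0"
      then have "j = 0 \<or> j = 1" by auto
      then show "0 \<le> g (P 0 j)" using gx gz P0 by auto
    qed
  next
    case (Suc k)
    show ?case
    proof (intro allI impI)
      fix j :: nat assume j: "j \<le> 2 ^ Suc k"
      show "0 \<le> g (P (Suc k) j)"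
      proof (cases "even j")
        case True
        then obtain i where i: "j = 2 * i" by blast
        have "real j / 2 ^ Suc k = real i / 2 ^ k" unfolding i by simp
        then have "P (Suc k) j = P k i" unfolding P_def by simp
        moreover have "i \<le> 2 ^ k" using j i by simp
        ultimately show ?thesis using Suc.IH by simp
      next
        case False
        then obtain i where i: "j = 2 * i + 1" using oddE by blast
        have ik: "i < 2 ^ k" using j i by simp
        define a where "a = real i / 2 ^ k"
        define b where "b = real (i + 1) / 2 ^ k"
        define e where "e = real j / 2 ^ Suc k"
        have e: "e = (a + b) / 2" unfolding a_def b_def e_def i by (simp add: field_simps)
        have ab: "a < e" "e < b" unfolding e a_def b_def by (simp_all add: field_simps)
        have pm: "P k i < P (Suc k) j" "P (Suc k) j < P k (i + 1)"
          unfolding P_def using ab xyz r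
          by (simp_all add: a_def b_def e_def powr_less_mono)
        have "r powr e * r powr e = r powr a * r powr b"
          by (simp add: e flip: powr_add)
        then have mm: "P (Suc k) j * P (Suc k) j = P k i * P k (i + 1)"
          unfolding P_def a_def b_def e_def by (simp add: algebra_simps)
        show ?thesis using gmid[OF Ppos pm mm] Suc.IH ik by simp
      qed
    qed
  qed
  define s where "s = ln (y / x) / ln r"
  have lr: "0 < ln r" using r by simp
  have s: "0 < s" "s < 1"
  proof -
    have "0 < ln (y / x)" using xyz by simp
    moreover have "ln (y / x) < ln r" using xyz unfolding r_def by (simp add: divide_strict_right_mono)
    ultimately show "0 < s" "s < 1" using lr unfolding s_def by simp_all
  qed
  have rs: "x * r powr s = y"
  proof -
    have "r powr s = exp (s * ln r)" using r by (simp add: powr_def)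
    also have "\<dots> = y / x" using lr xyz unfolding s_def by simp
    finally show ?thesis using xyz by simp
  qed
  define J where "J k = nat \<lfloor>s * 2^k\<rfloor>" for k :: nat
  have J0: "real (J k) = real_of_int \<lfloor>s * 2^k\<rfloor>" for k
    unfolding J_def using s by simp
  have J1: "J k \<le> 2^k" for k
  proof -
    have "real (J k) \<le> s * 2^k" unfolding J0 by linarith
    also have "s * 2^k \<le> 2^k" using s by simp
    finally have "real (J k) \<le> real ((2::nat)^k)" by simp
    then show ?thesis by (simp only: of_nat_le_iff)
  qed
  have J2: "s - (1/2)^k \<le> real (J k) / 2^k \<and> real (J k) / 2^k \<le> s" for k
  proof -
    have h1: "s * 2^k - 1 \<le> real (J k)" and h2: "real (J k) \<le> s * 2^k" unfolding J0 by linarith+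
    have a: "(s * 2^k - 1) / 2^k \<le> real (J k) / 2^k" "real (J k) / 2^k \<le> (s * 2^k) / 2^k"
      using divide_right_mono[OF h1, of "2^k"] divide_right_mono[OF h2, of "2^k"] by auto
    have b: "(s * 2^k - 1) / 2^k = s - (1/2)^k" "(s * 2^k) / (2::real)^k = s"
      by (simp_all add: power_one_over diff_divide_distrib)
    show ?thesis using a b by simp
  qed
  have "(\<lambda>k. s - (1/2::real)^k) \<longlonglongrightarrow> s - 0"
    by (intro tendsto_diff tendsto_const LIMSEQ_realpow_zero) simp_all
  then have lo: "(\<lambda>k. s - (1/2::real)^k) \<longlonglongrightarrow> s" by simp
  have Jlim: "(\<lambda>k. real (J k) / 2^k) \<longlonglongrightarrow> s"
  proof (rule tendsto_sandwich[OF _ _ lo tendsto_const])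
    show "\<forall>\<^sub>F n in sequentially. s - (1 / 2) ^ n \<le> real (J n) / 2 ^ n" using J2 by simp
    show "\<forall>\<^sub>F n in sequentially. real (J n) / 2 ^ n \<le> s" using J2 by simp
  qed
  have "(\<lambda>k. r powr (real (J k) / 2^k)) \<longlonglongrightarrow> r powr s"
    using tendsto_powr[OF tendsto_const Jlim, of r] r by simp
  then have "(\<lambda>k. P k (J k)) \<longlonglongrightarrow> x * r powr s"
    unfolding P_def by (rule tendsto_mult_left)
  then have Plim: "(\<lambda>k. P k (J k)) \<longlonglongrightarrow> y" using rs by simp
  have "isCont g y" unfolding g_def using cont[of y] xyz by (intro continuous_intros) auto
  then have "(\<lambda>k. g (P k (J k))) \<longlonglongrightarrow> g y" by (rule isCont_tendsto_compose[OF _ Plim])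
  then have gy: "0 \<le> g y"
    using dy J1 by (intro tendsto_lowerbound) (auto intro!: always_eventually)
  have "(f z - f x) * (y - x) \<le> (f y - f x) * (z - x)"
    using gy xyz unfolding g_def K_def by (simp add: field_simps)
  then show ?thesis by (simp add: algebra_simps)
qed

lemma M2_cfun: assumes "L \<in> M2" "0 \<le> w" shows "cfun (\<lambda>t. L t w)"
  unfolding cfun_def
proof (intro conjI allI impI)
  fix x y z :: real assume xyz: "0 < x" "x < y" "y < z"
  show "(L z w - L y w) * (y - x) \<le> (L y w - L x w) * (z - y)"
  proof (rule geo_conc[of "\<lambda>t. L t w", OF _ _ xyz])
    show "L b w - L a w \<le> c * (L (b / c) w - L (a / c) w)" if "0 \<le> a" "a \<le> b" "1 \<le> c" for a b c
      using M2_scale[OF assms(1) that(1,2) assms(2) that(3)] .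
    show "isCont (\<lambda>t. L t w) y" if "0 < y" for y
      using M2_incr[OF assms(1) _ _ assms(2)] that by (intro lip_isCont) auto
  qed
next
  fix a b :: real assume "0 \<le> a" "a \<le> b"
  then show "0 \<le> L b w - L a w" "L b w - L a w \<le> b - a" using M2_incr[OF assms(1) _ _ assms(2)] by auto
qed

definition clampv :: "real^'d \<Rightarrow> real^'d" where
  "clampv u = (\<chi> i. max 0 (min 1 (u $ i)))"

lemma clampv_cube: "unit_cube (clampv u)"
  unfolding unit_cube_def clampv_def by auto

lemma clampv_id: "unit_cube u \<Longrightarrow> clampv u = u"
  unfolding unit_cube_def clampv_def by (simp add: vec_eq_iff)

lemma clampv_lip: "\<bar>clampv u $ i - clampv v $ i\<bar> \<le> \<bar>u $ i - v $ i\<bar>"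
  unfolding clampv_def by (simp add: max_def min_def abs_if)

definition Cc :: "(real^'d \<Rightarrow> real) \<Rightarrow> real^'d \<Rightarrow> real" where
  "Cc C u = C (clampv u)"

lemma Cc_lip: assumes "copula C" shows "\<bar>Cc C u - Cc C v\<bar> \<le> (\<Sum>i\<in>UNIV. \<bar>u $ i - v $ i\<bar>)"
proof -
  have "\<bar>Cc C u - Cc C v\<bar> \<le> (\<Sum>i\<in>UNIV. \<bar>clampv u $ i - clampv v $ i\<bar>)"
    using copula_lip[OF assms clampv_cube clampv_cube, of u v] copula_lip[OF assms clampv_cube clampv_cube, of v u]
    unfolding Cc_def by (simp add: abs_minus_commute)
  also have "\<dots> \<le> (\<Sum>i\<in>UNIV. \<bar>u $ i - v $ i\<bar>)" by (intro sum_mono clampv_lip)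
  finally show ?thesis .
qed

lemma Cc_bnd: "copula C \<Longrightarrow> 0 \<le> Cc C u \<and> Cc C u \<le> 1"
  unfolding Cc_def using copula_bnd clampv_cube by blast

lemma Cc_cube: "unit_cube u \<Longrightarrow> Cc C u = C u"
  unfolding Cc_def by (simp add: clampv_id)

lemma Cc_cont: fixes C :: "real^'d \<Rightarrow> real" assumes "copula C" shows "continuous_on UNIV (Cc C)"
proof -
  have "(real CARD('d))-lipschitz_on UNIV (Cc C :: real^'d \<Rightarrow> real)"
  proof (rule lipschitz_onI)
    fix x y :: "real^'d"
    have "dist (Cc C x) (Cc C y) \<le> (\<Sum>i\<in>UNIV. \<bar>x $ i - y $ i\<bar>)"
      using Cc_lip[OF assms] by (simp add: dist_real_def)
    also have "\<dots> \<le> (\<Sum>i\<in>(UNIV::'d set). dist x y)"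
      by (intro sum_mono) (metis component_le_norm_cart dist_norm vector_minus_component)
    also have "\<dots> = real CARD('d) * dist x y" by simp
    finally show "dist (Cc C x) (Cc C y) \<le> real CARD('d) * dist x y" .
  qed simp
  then show ?thesis by (rule lipschitz_on_continuous_on)
qed

lemma vec_meas:
  assumes "\<And>i. (\<lambda>t. g i t) \<in> borel_measurable M"
  shows "(\<lambda>t. (\<chi> i. g i t) :: real^'d) \<in> borel_measurable M"
proof (rule borel_measurable_euclidean_space[THEN iffD2], intro ballI)
  fix b :: "real^'d" assume "b \<in> Basis"
  then obtain i where "b = axis i 1" unfolding Basis_vec_def by auto
  then show "(\<lambda>x. (\<chi> i. g i x) \<bullet> b) \<in> borel_measurable M" using assms[of i] by (simp add: inner_axis)
qed

lemma bl: "f \<in> borel_measurable borel \<Longrightarrow> f \<in> borel_measurable (lebesgue :: real measure)"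
proof -
  assume "f \<in> borel_measurable borel"
  then have "f \<in> borel_measurable (lborel :: real measure)" by (simp only: measurable_lborel2)
  then show ?thesis by (rule measurable_completion)
qed

definition Gf :: "(real^'d \<Rightarrow> real) \<Rightarrow> ('d \<Rightarrow> real \<Rightarrow> real \<Rightarrow> real) \<Rightarrow> real^'d \<Rightarrow> real \<Rightarrow> real" where
  "Gf D Xi w t = Cc D (\<chi> i. pd (\<lambda>s. Xi i s (w $ i)) t)"

lemma Gf_meas:
  fixes D :: "real^'d \<Rightarrow> real"
  assumes "copula D" "\<And>i. Xi i \<in> M2" "nonneg_vec w"
  shows "Gf D Xi w \<in> borel_measurable borel"
proof -
  have "(\<lambda>t. (\<chi> i. pd (\<lambda>s. Xi i s (w $ i)) t) :: real^'d) \<in> borel_measurable borel"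
    using assms by (intro vec_meas pd_meas M2_cfun) (auto simp: nonneg_vec_def)
  from borel_measurable_continuous_on[OF Cc_cont[OF assms(1)] this] show ?thesis
    unfolding Gf_def[abs_def] .
qed

lemma Gf_meas_L:
  fixes D :: "real^'d \<Rightarrow> real"
  assumes "copula D" "\<And>i. Xi i \<in> M2" "nonneg_vec w"
  shows "Gf D Xi w \<in> borel_measurable lebesgue"
  using Gf_meas[OF assms] by (rule bl)

lemma Gf_bnd: "copula D \<Longrightarrow> 0 \<le> Gf D Xi w t \<and> Gf D Xi w t \<le> 1"
  unfolding Gf_def by (rule Cc_bnd)

lemma Gf_eq:
  fixes D :: "real^'d \<Rightarrow> real"
  assumes "\<And>i. Xi i \<in> M2" "nonneg_vec w" "0 < t"
  shows "D (\<chi> i. part1 (Xi i) t (w $ i)) = Gf D Xi w t"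
proof -
  have e: "(\<chi> i. part1 (Xi i) t (w $ i)) = (\<chi> i. pd (\<lambda>s. Xi i s (w $ i)) t)"
    using assms(3) unfolding part1_def pd_def by simp
  have "unit_cube (\<chi> i. pd (\<lambda>s. Xi i s (w $ i)) t)"
    unfolding unit_cube_def using pd_bnd M2_cfun assms(1,2) by (auto simp: nonneg_vec_def)
  then show ?thesis unfolding e Gf_def by (simp add: Cc_cube)
qed

lemma phi_fin_eq:
  fixes D :: "real^'d \<Rightarrow> real"
  assumes "copula D" "\<And>i. Xi i \<in> M2" "nonneg_vec w"
  shows "phi_fin D w0 Xi w = (LINT t:{0..w0}|lebesgue. Gf D Xi w t)"
proof -
  have "phi_fin D w0 Xi w = integral {0..w0} (Gf D Xi w)"
    unfolding phi_fin_def
    by (rule integral_spike[of "{0}"]) (use Gf_eq[OF assms(2,3)] in auto)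
  moreover have "set_integrable lebesgue {0..w0} (Gf D Xi w)"
    unfolding set_integrable_def
    by (rule integrableI_bounded_set_indicator[where B=1])
       (use Gf_meas_L[OF assms] Gf_bnd[OF assms(1)] lmeasurable_interval(1)[of 0 w0] in \<open>auto simp: fmeasurable_def\<close>)
  from set_lebesgue_integral_eq_integral(2)[OF this] have "(LINT t:{0..w0}|lebesgue. Gf D Xi w t) = integral {0..w0} (Gf D Xi w)" .
  ultimately show ?thesis by simp
qed

lemma phi_inf_eq:
  fixes D :: "real^'d \<Rightarrow> real"
  assumes "\<And>i. Xi i \<in> M2" "nonneg_vec w"
  shows "phi_inf D Xi w = integral {0..} (Gf D Xi w)"
  unfolding phi_inf_def
  by (rule integral_spike[of "{0}"]) (use Gf_eq[OF assms] in auto)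

lemma Icc_L: "{0..(w0::real)} \<in> sets lebesgue" "emeasure lebesgue {0..(w0::real)} < \<infinity>"
proof -
  show "{0..(w0::real)} \<in> sets lebesgue" using fmeasurableD[OF lmeasurable_interval(1)[of 0 w0]] .
  show "emeasure lebesgue {0..(w0::real)} < \<infinity>"
    using fmeasurableD2[OF lmeasurable_interval(1)[of 0 w0]] by (simp add: less_top)
qed

lemma dom_conv:
  fixes D :: "nat \<Rightarrow> real^'d \<Rightarrow> real" and E :: "real^'d \<Rightarrow> real"
  assumes D: "\<And>n. copula (D n)" "copula E"
    and X: "\<And>n i. X n i \<in> M2" "\<And>i. Y i \<in> M2" and w: "nonneg_vec w"
    and lim: "AE t in lebesgue. (\<lambda>n. Gf (D n) (X n) w t) \<longlonglongrightarrow> Gf E Y w t"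
  shows "(\<lambda>n. phi_fin (D n) w0 (X n) w) \<longlonglongrightarrow> phi_fin E w0 Y w"
proof -
  have e: "phi_fin (D n) w0 (X n) w = (LINT t:{0..w0}|lebesgue. Gf (D n) (X n) w t)" for n
    by (rule phi_fin_eq[OF D(1) X(1) w])
  have e0: "phi_fin E w0 Y w = (LINT t:{0..w0}|lebesgue. Gf E Y w t)"
    by (rule phi_fin_eq[OF D(2) X(2) w])
  have ind: "indicator {0..w0} \<in> borel_measurable (lebesgue :: real measure)"
    using Icc_L(1) by (rule borel_measurable_indicator)
  show ?thesis unfolding e e0 set_lebesgue_integral_def
  proof (rule integral_dominated_convergence[where w = "indicator {0..w0}"])
    show "(\<lambda>t. indicator {0..w0} t *\<^sub>R Gf E Y w t) \<in> borel_measurable lebesgue"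
      by (intro borel_measurable_scaleR ind Gf_meas_L D X w)
    show "(\<lambda>t. indicator {0..w0} t *\<^sub>R Gf (D n) (X n) w t) \<in> borel_measurable lebesgue" for n
      by (intro borel_measurable_scaleR ind Gf_meas_L D X w)
    show "integrable lebesgue (indicator {0..w0} :: real \<Rightarrow> real)"
      using Icc_L by (rule integrable_real_indicator)
    show "AE t in lebesgue. (\<lambda>n. indicator {0..w0} t *\<^sub>R Gf (D n) (X n) w t) \<longlonglongrightarrow> indicator {0..w0} t *\<^sub>R Gf E Y w t"
      using lim by eventually_elim (rule tendsto_scaleR[OF tendsto_const])
    show "AE t in lebesgue. norm (indicator {0..w0} t *\<^sub>R Gf (D n) (X n) w t) \<le> indicator {0..w0} t" for n
      using Gf_bnd[OF D(1), of n "X n" w] by (auto simp: indicator_def)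
  qed
qed

lemma part_one:
  fixes L :: "'d::finite \<Rightarrow> real \<Rightarrow> real \<Rightarrow> real" and C :: "real^'d \<Rightarrow> real"
  assumes L: "\<And>i. L i \<in> M2" and C: "copula C"
  shows "\<forall>Cn :: nat \<Rightarrow> real^'d \<Rightarrow> real.
       (\<forall>n. copula (Cn n)) \<and> (\<forall>u. unit_cube u \<longrightarrow> (\<lambda>n. Cn n u) \<longlonglongrightarrow> C u) \<longrightarrow>
       (\<forall>w0 w. 0 \<le> w0 \<and> nonneg_vec w \<longrightarrow>
          (\<lambda>n. phi_fin (Cn n) w0 L w) \<longlonglongrightarrow> phi_fin C w0 L w)"
proof (intro allI impI, elim conjE)
  fix Cn :: "nat \<Rightarrow> real^'d \<Rightarrow> real" and w0 :: real and w :: "real^'d"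
  assume Cn: "\<forall>n. copula (Cn n)" and lim: "\<forall>u. unit_cube u \<longrightarrow> (\<lambda>n. Cn n u) \<longlonglongrightarrow> C u"
    and w0: "0 \<le> w0" and w: "nonneg_vec w"
  show "(\<lambda>n. phi_fin (Cn n) w0 L w) \<longlonglongrightarrow> phi_fin C w0 L w"
  proof -
    have ae: "AE t in lebesgue. (\<lambda>n. Gf (Cn n) L w t) \<longlonglongrightarrow> Gf C L w t"
      unfolding Gf_def Cc_def using lim clampv_cube by auto
    have ae': "AE t in lebesgue. (\<lambda>n. Gf (Cn n) ((\<lambda>n. L) n) w t) \<longlonglongrightarrow> Gf C L w t"
      using ae by simp
    show ?thesis using dom_conv[where D=Cn and E=C and X="\<lambda>n. L" and Y=L and w=w, OF _ C _ L _ ae'] Cn L w by auto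
  qed
qed

lemma part_two:
  fixes L :: "'d::finite \<Rightarrow> real \<Rightarrow> real \<Rightarrow> real" and C :: "real^'d \<Rightarrow> real"
  assumes L: "\<And>i. L i \<in> M2" and C: "copula C"
  shows "\<forall>Ln :: nat \<Rightarrow> 'd \<Rightarrow> real \<Rightarrow> real \<Rightarrow> real.
       (\<forall>n i. Ln n i \<in> M2) \<and>
       (\<forall>i t w. 0 \<le> t \<and> 0 \<le> w \<longrightarrow> (\<lambda>n. Ln n i t w) \<longlonglongrightarrow> L i t w) \<longrightarrow>
       (\<forall>w0 w. 0 \<le> w0 \<and> nonneg_vec w \<longrightarrow>
          (\<lambda>n. phi_fin C w0 (Ln n) w) \<longlonglongrightarrow> phi_fin C w0 L w)"
proof (intro allI impI, elim conjE)
  fix Ln :: "nat \<Rightarrow> 'd \<Rightarrow> real \<Rightarrow> real \<Rightarrow> real" and w0 :: real and w :: "real^'d"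
  assume Ln: "\<forall>n i. Ln n i \<in> M2"
    and conv: "\<forall>i t w. 0 \<le> t \<and> 0 \<le> w \<longrightarrow> (\<lambda>n. Ln n i t w) \<longlonglongrightarrow> L i t w"
    and w0: "0 \<le> w0" and w: "nonneg_vec w"
  define f where "f i = (\<lambda>s. L i s (w $ i))" for i
  define fn where "fn n i = (\<lambda>s. Ln n i s (w $ i))" for n i
  have wi: "0 \<le> w $ i" for i using w unfolding nonneg_vec_def by auto
  have cf: "cfun (f i)" for i unfolding f_def by (rule M2_cfun[OF L wi])
  have cfn: "cfun (fn n i)" for n i unfolding fn_def using Ln wi by (intro M2_cfun) auto
  define N where "N = (\<Union>i. {t\<in>{0<..}. \<not> isCont (rd (f i)) t}) \<union> (\<Union>n. \<Union>i. {t\<in>{0<..}. \<not> isCont (rd (fn n i)) t})"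
  have cN: "countable N" unfolding N_def
    using R9[OF cf] R9[OF cfn] by (intro countable_Un countable_UN) auto
  have aeN: "AE t in lebesgue. t \<notin> N"
    by (rule AE_completion[OF AE_not_in[OF countable_imp_null_set_lborel[OF cN]]])
  have ae: "AE t in lebesgue. (\<lambda>n. Gf C (Ln n) w t) \<longlonglongrightarrow> Gf C L w t"
    using aeN
  proof eventually_elim
    case (elim t)
    have vec: "(\<lambda>n. \<chi> i. pd (fn n i) t) \<longlonglongrightarrow> (\<chi> i. pd (f i) t)"
    proof (rule tendsto_vec_lambda)
      fix i
      show "(\<lambda>n. pd (fn n i) t) \<longlonglongrightarrow> pd (f i) t"
      proof (cases "0 < t")
        case False
        then show ?thesis unfolding pd_def by simp
      next
        case True
        have c1: "isCont (rd (f i)) t" using elim True unfolding N_def by auto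
        have c2: "isCont (rd (fn n i)) t" for n using elim True unfolding N_def by auto
        have e1: "pd (f i) t = rd (f i) t" by (rule pd_cont[OF cf True c1])
        have e2: "pd (fn n i) t = rd (fn n i) t" for n by (rule pd_cont[OF cfn True c2])
        have d: "f i differentiable (at t)"
          using R7[OF cf True c1] unfolding real_differentiable_def by blast
        have "(\<lambda>n. rd (fn n i) t) \<longlonglongrightarrow> rd (f i) t"
        proof (rule R10[OF cf cfn _ True d])
          fix s :: real assume "0 < s"
          then show "(\<lambda>n. fn n i s) \<longlonglongrightarrow> f i s" unfolding fn_def f_def using conv wi by auto
        qed
        then show ?thesis unfolding e1 e2 .
      qed
    qed
    have "isCont (Cc C) (\<chi> i. pd (f i) t)"
      using Cc_cont[OF C] by (simp add: continuous_on_eq_continuous_at)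
    from isCont_tendsto_compose[OF this vec]
    show ?case unfolding Gf_def f_def fn_def .
  qed
  show "(\<lambda>n. phi_fin C w0 (Ln n) w) \<longlonglongrightarrow> phi_fin C w0 L w"
    using dom_conv[where D="\<lambda>n. C" and E=C and X=Ln and Y=L and w=w, OF _ C _ L w ae] C Ln by auto
qed

lemma part_three:
  fixes L :: "'d::finite \<Rightarrow> real \<Rightarrow> real \<Rightarrow> real" and C :: "real^'d \<Rightarrow> real"
  assumes L: "\<And>i. L i \<in> M2" and C: "copula C"
  shows "\<forall>Ln :: nat \<Rightarrow> 'd \<Rightarrow> real \<Rightarrow> real \<Rightarrow> real.
       (\<forall>n i. Ln n i \<in> M2) \<and>
       (\<forall>i w. 0 \<le> w \<longrightarrow>
          (\<lambda>n. \<integral>\<^sup>+ t \<in> {0..}. ennreal \<bar>part1 (Ln n i) t w - part1 (L i) t w\<bar> \<partial>lebesgue)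
            \<longlonglongrightarrow> 0) \<longrightarrow>
       (\<forall>w. nonneg_vec w \<longrightarrow>
          (\<lambda>n. phi_inf C (Ln n) w) \<longlonglongrightarrow> phi_inf C L w)"
proof (intro allI impI, elim conjE)
  fix Ln :: "nat \<Rightarrow> 'd \<Rightarrow> real \<Rightarrow> real \<Rightarrow> real" and w :: "real^'d"
  assume Ln: "\<forall>n i. Ln n i \<in> M2"
    and hyp: "\<forall>i w. 0 \<le> w \<longrightarrow>
          (\<lambda>n. \<integral>\<^sup>+ t \<in> {0..}. ennreal \<bar>part1 (Ln n i) t w - part1 (L i) t w\<bar> \<partial>lebesgue)
            \<longlonglongrightarrow> 0"
    and w: "nonneg_vec w"
  define f where "f i = (\<lambda>s. L i s (w $ i))" for i
  define fn where "fn n i = (\<lambda>s. Ln n i s (w $ i))" for n i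
  have wi: "0 \<le> w $ i" for i using w unfolding nonneg_vec_def by auto
  have cf: "cfun (f i)" for i unfolding f_def by (rule M2_cfun[OF L wi])
  have cfn: "cfun (fn n i)" for n i unfolding fn_def using Ln wi by (intro M2_cfun) auto
  define dd where "dd n i t = \<bar>pd (fn n i) t - pd (f i) t\<bar>" for n i t
  have dd_meas: "dd n i \<in> borel_measurable lebesgue" for n i
    unfolding dd_def[abs_def]
    by (intro bl borel_measurable_abs borel_measurable_diff pd_meas cf cfn)
  have dd_nn: "0 \<le> dd n i t" for n i t unfolding dd_def by simp
  define Dn where "Dn n i = (\<integral>\<^sup>+ t. ennreal (dd n i t) \<partial>lebesgue)" for n i
  have ae0: "AE t in lebesgue. t \<noteq> (0::real)"
    using AE_completion[OF AE_not_in[OF countable_imp_null_set_lborel[of "{0::real}"]]] by simp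
  have eqD: "(\<integral>\<^sup>+ t \<in> {0..}. ennreal \<bar>part1 (Ln n i) t (w $ i) - part1 (L i) t (w $ i)\<bar> \<partial>lebesgue) = Dn n i" for n i
    unfolding Dn_def
  proof (rule nn_integral_cong_AE)
    show "AE t in lebesgue. ennreal \<bar>part1 (Ln n i) t (w $ i) - part1 (L i) t (w $ i)\<bar> * indicator {0..} t = ennreal (dd n i t)"
      using ae0
    proof eventually_elim
      case (elim t)
      show ?case
      proof (cases "0 < t")
        case True
        then show ?thesis unfolding dd_def pd_def part1_def fn_def f_def by simp
      next
        case False
        then have "t < 0" using elim by simp
        then show ?thesis unfolding dd_def pd_def by simp
      qed
    qed
  qed
  have DnL: "(\<lambda>n. Dn n i) \<longlonglongrightarrow> 0" for i
  proof -
    have "(\<lambda>n. \<integral>\<^sup>+ t \<in> {0..}. ennreal \<bar>part1 (Ln n i) t (w $ i) - part1 (L i) t (w $ i)\<bar> \<partial>lebesgue) \<longlonglongrightarrow> 0"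
      using hyp wi by blast
    then show ?thesis unfolding eqD .
  qed
  define E where "E n = (\<Sum>i\<in>UNIV. enn2real (Dn n i))" for n
  have E0: "E \<longlonglongrightarrow> 0"
  proof -
    have "(\<lambda>n. \<Sum>i\<in>UNIV. enn2real (Dn n i)) \<longlonglongrightarrow> (\<Sum>i\<in>(UNIV::'d set). 0)"
      by (intro tendsto_sum tendsto_enn2real) (use DnL in simp_all)
    then show ?thesis unfolding E_def[abs_def] by simp
  qed
  have intD: "integral\<^sup>L lebesgue (dd n i) = enn2real (Dn n i)" for n i
    unfolding Dn_def by (rule integral_eq_nn_integral[OF dd_meas]) (simp add: dd_nn)
  have ev: "\<forall>\<^sub>F n in sequentially. \<forall>i. Dn n i < 1"
    using DnL by (intro eventually_all_finite order_tendstoD(2)) auto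
  define S where "S = {0::real..}"
  define G where "G n = Gf C (Ln n) w" for n
  define G0 where "G0 = Gf C L w"
  have Gm: "G n \<in> borel_measurable lebesgue" for n
    unfolding G_def using C Ln w by (intro Gf_meas_L) auto
  have G0m: "G0 \<in> borel_measurable lebesgue"
    unfolding G0_def using C L w by (intro Gf_meas_L) auto
  have Gb: "\<bar>G n t - G0 t\<bar> \<le> (\<Sum>i\<in>UNIV. dd n i t)" for n t
  proof -
    have "\<bar>Cc C (\<chi> i. pd (fn n i) t) - Cc C (\<chi> i. pd (f i) t)\<bar> \<le> (\<Sum>i\<in>UNIV. \<bar>(\<chi> i. pd (fn n i) t) $ i - (\<chi> i. pd (f i) t) $ i\<bar>)"
      by (rule Cc_lip[OF C])
    then show ?thesis unfolding G_def G0_def Gf_def dd_def fn_def f_def by simp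
  qed
  have key: "norm (integral S (G n) - integral S G0) \<le> E n" if good: "\<forall>i. Dn n i < 1" for n
  proof -
    have fin: "Dn n i = ennreal (enn2real (Dn n i))" for i
    proof -
      have "(1::ennreal) < top" by simp
      then have "Dn n i < top" using good[rule_format, of i] by (meson order.strict_trans)
      then show ?thesis by simp
    qed
    have idd: "integrable lebesgue (dd n i)" for i
      by (rule integrableI_nn_integral_finite[OF dd_meas _ fin[unfolded Dn_def]]) (simp add: dd_nn)
    have isum: "integrable lebesgue (\<lambda>t. \<Sum>i\<in>UNIV. dd n i t)"
      using idd by (intro Bochner_Integration.integrable_sum) auto
    have Esum: "integral\<^sup>L lebesgue (\<lambda>t. \<Sum>i\<in>UNIV. dd n i t) = E n"
      unfolding E_def using idd intD by (subst Bochner_Integration.integral_sum) auto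
    have sdiff: "set_integrable lebesgue S (\<lambda>t. G n t - G0 t)"
      unfolding set_integrable_def
    proof (rule Bochner_Integration.integrable_bound[OF isum])
      show "(\<lambda>t. indicator S t *\<^sub>R (G n t - G0 t)) \<in> borel_measurable lebesgue"
        unfolding S_def
        by (intro borel_measurable_scaleR borel_measurable_indicator borel_measurable_diff Gm G0m) simp
      show "AE t in lebesgue. norm (indicator S t *\<^sub>R (G n t - G0 t)) \<le> norm (\<Sum>i\<in>UNIV. dd n i t)"
      proof (rule AE_I2)
        fix t
        have "norm (indicator S t *\<^sub>R (G n t - G0 t)) \<le> \<bar>G n t - G0 t\<bar>" by (simp add: indicator_def)
        also have "\<dots> \<le> (\<Sum>i\<in>UNIV. dd n i t)" by (rule Gb)
        also have "\<dots> = norm (\<Sum>i\<in>UNIV. dd n i t)" using dd_nn by (simp add: sum_nonneg)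
        finally show "norm (indicator S t *\<^sub>R (G n t - G0 t)) \<le> norm (\<Sum>i\<in>UNIV. dd n i t)" .
      qed
    qed
    have bnd: "norm (integral S (\<lambda>t. G n t - G0 t)) \<le> E n"
    proof -
      have "integral S (\<lambda>t. G n t - G0 t) = (LINT t:S|lebesgue. G n t - G0 t)"
        using set_lebesgue_integral_eq_integral(2)[OF sdiff] by simp
      also have "\<dots> = integral\<^sup>L lebesgue (\<lambda>t. indicator S t *\<^sub>R (G n t - G0 t))"
        unfolding set_lebesgue_integral_def ..
      finally have eq: "integral S (\<lambda>t. G n t - G0 t) = integral\<^sup>L lebesgue (\<lambda>t. indicator S t *\<^sub>R (G n t - G0 t))" .
      have "norm (integral\<^sup>L lebesgue (\<lambda>t. indicator S t *\<^sub>R (G n t - G0 t))) \<le> integral\<^sup>L lebesgue (\<lambda>t. \<Sum>i\<in>UNIV. dd n i t)"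
      proof (rule Bochner_Integration.integral_norm_bound_integral)
        show "integrable lebesgue (\<lambda>t. indicator S t *\<^sub>R (G n t - G0 t))"
          using sdiff unfolding set_integrable_def .
        show "integrable lebesgue (\<lambda>t. \<Sum>i\<in>UNIV. dd n i t)" by (rule isum)
        fix t
        have "norm (indicator S t *\<^sub>R (G n t - G0 t)) \<le> \<bar>G n t - G0 t\<bar>" by (simp add: indicator_def)
        also have "\<dots> \<le> (\<Sum>i\<in>UNIV. dd n i t)" by (rule Gb)
        finally show "norm (indicator S t *\<^sub>R (G n t - G0 t)) \<le> (\<Sum>i\<in>UNIV. dd n i t)" .
      qed
      then show ?thesis unfolding eq Esum .
    qed
    have idf: "(\<lambda>t. G n t - G0 t) integrable_on S"
      using set_lebesgue_integral_eq_integral(1)[OF sdiff] .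
    have E_nn: "0 \<le> E n" unfolding E_def by (intro sum_nonneg) (simp add: enn2real_nonneg)
    show ?thesis
    proof (cases "G0 integrable_on S")
      case True
      have "(\<lambda>t. G0 t + (G n t - G0 t)) integrable_on S" by (intro integrable_add True idf)
      then have iGn: "G n integrable_on S" by simp
      have "integral S (\<lambda>t. G n t - G0 t) = integral S (G n) - integral S G0"
        by (rule integral_diff[OF iGn True])
      then show ?thesis using bnd by simp
    next
      case False
      have "\<not> G n integrable_on S"
      proof
        assume "G n integrable_on S"
        then have "(\<lambda>t. G n t - (G n t - G0 t)) integrable_on S" by (intro integrable_diff idf)
        then show False using False by simp
      qed
      then show ?thesis using False E_nn by (simp add: not_integrable_integral)
    qed
  qed
  have "(\<lambda>n. integral S (G n) - integral S G0) \<longlonglongrightarrow> 0"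
    by (rule Lim_null_comparison[OF eventually_mono[OF ev key] E0])
  then have "(\<lambda>n. integral S (G n)) \<longlonglongrightarrow> integral S G0" by (rule LIM_zero_cancel)
  moreover have "phi_inf C (Ln n) w = integral S (G n)" for n
    unfolding G_def S_def using Ln w by (intro phi_inf_eq) auto
  moreover have "phi_inf C L w = integral S G0"
    unfolding G0_def S_def using L w by (intro phi_inf_eq) auto
  ultimately show "(\<lambda>n. phi_inf C (Ln n) w) \<longlonglongrightarrow> phi_inf C L w" by simp
qed

theorem mainTheorem2:
  fixes L :: "'d::finite \<Rightarrow> real \<Rightarrow> real \<Rightarrow> real" and C :: "real^'d \<Rightarrow> real"
  assumes L: "\<And>i. L i \<in> M2" and C: "copula C"
  shows
   "(\<forall>Cn :: nat \<Rightarrow> real^'d \<Rightarrow> real.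
       (\<forall>n. copula (Cn n)) \<and> (\<forall>u. unit_cube u \<longrightarrow> (\<lambda>n. Cn n u) \<longlonglongrightarrow> C u) \<longrightarrow>
       (\<forall>w0 w. 0 \<le> w0 \<and> nonneg_vec w \<longrightarrow>
          (\<lambda>n. phi_fin (Cn n) w0 L w) \<longlonglongrightarrow> phi_fin C w0 L w))
  \<and> (\<forall>Ln :: nat \<Rightarrow> 'd \<Rightarrow> real \<Rightarrow> real \<Rightarrow> real.
       (\<forall>n i. Ln n i \<in> M2) \<and>
       (\<forall>i t w. 0 \<le> t \<and> 0 \<le> w \<longrightarrow> (\<lambda>n. Ln n i t w) \<longlonglongrightarrow> L i t w) \<longrightarrow>
       (\<forall>w0 w. 0 \<le> w0 \<and> nonneg_vec w \<longrightarrow>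
          (\<lambda>n. phi_fin C w0 (Ln n) w) \<longlonglongrightarrow> phi_fin C w0 L w))
  \<and> (\<forall>Ln :: nat \<Rightarrow> 'd \<Rightarrow> real \<Rightarrow> real \<Rightarrow> real.
       (\<forall>n i. Ln n i \<in> M2) \<and>
       (\<forall>i w. 0 \<le> w \<longrightarrow>
          (\<lambda>n. \<integral>\<^sup>+ t \<in> {0..}. ennreal \<bar>part1 (Ln n i) t w - part1 (L i) t w\<bar> \<partial>lebesgue)
            \<longlonglongrightarrow> 0) \<longrightarrow>
       (\<forall>w. nonneg_vec w \<longrightarrow>
          (\<lambda>n. phi_inf C (Ln n) w) \<longlonglongrightarrow> phi_inf C L w))"
    using part_one[OF L C] part_two[OF L C] part_three[OF L C] by (intro conjI)

end
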